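(* Let $0<\alpha<1$ and define, for real $\xi,\eta$ with $\eta\neq0$, $\xi-\eta\neq 0$, $\xi\ne 0$, $$m(\xi-\eta,\eta)=\frac{\xi(1+|\xi-\eta|^\alpha)(1+|\eta|^\alpha)}{2\left[\xi(1+|\eta|^\alpha)(|\xi-\eta|^\alpha-|\xi|^\alpha)-\eta(1+|\xi|^\alpha)(|\xi-\eta|^\alpha-|\eta|^\alpha)\right]}.$$ Then, with implicit constants depending only on $\alpha$, $$\frac{|\xi-\eta|}{|\eta|}+\frac{|\eta|}{|\xi-\eta|}\lesssim|m(\xi-\eta,\eta)|\lesssim\frac{|\xi-\eta|^{1-\alpha}}{|\eta|}+\frac{|\eta|^{1-\alpha}}{|\xi-\eta|}\quad \text{for } (\xi-\eta)^2+\eta^2\leq 1,$$ and $$\frac{|\xi-\eta|^{1-\alpha}}{|\eta|}+\frac{|\eta|^{1-\alpha}}{|\xi-\eta|}\lesssim|m(\xi-\eta,\eta)|\lesssim \frac{|\xi-\eta|}{|\eta|}+\frac{|\eta|}{|\xi-\eta|}\quad \text{for } (\xi-\eta)^2+\eta^2\geq 1.$$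
   Context: $f\lesssim g$ means $f\le Cg$ for a constant $C$ independent of the variables. The function $m$ is regarded as a function of the two variables $(\xi-\eta,\eta)$. *)

theory Defs
  imports "HOL-Analysis.Analysis"
begin

definition m_mult :: "real \<Rightarrow> real \<Rightarrow> real \<Rightarrow> real" where
  "m_mult \<alpha> x y =
     (let \<xi> = x + y; \<eta> = y in
      \<xi> * (1 + \<bar>x\<bar> powr \<alpha>) * (1 + \<bar>\<eta>\<bar> powr \<alpha>) /
      (2 * (\<xi> * (1 + \<bar>\<eta>\<bar> powr \<alpha>) * (\<bar>x\<bar> powr \<alpha> - \<bar>\<xi>\<bar> powr \<alpha>)
            - \<eta> * (1 + \<bar>\<xi>\<bar> powr \<alpha>) * (\<bar>x\<bar> powr \<alpha> - \<bar>\<eta>\<bar> powr \<alpha>))))"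

end

theory Submission imports Defs begin

lemma powr_add_le:
  fixes u v a :: real
  assumes "0 < u" "0 \<le> v" "0 \<le> a" "a \<le> 1"
  shows "(u+v) powr a \<le> u powr a * (1 + v/u)"
proof -
  have e: "u + v = u * (1 + v/u)" using assms by (simp add: field_simps)
  have "(1 + v/u) powr a \<le> (1 + v/u) powr 1"
    using assms by (intro powr_mono) auto
  hence "(1 + v/u) powr a \<le> 1 + v/u" using assms by simp
  moreover have "(u+v) powr a = u powr a * (1 + v/u) powr a"
    using assms by (subst e) (simp add: powr_mult)
  ultimately show ?thesis using assms by (simp add: mult_left_mono)
qed

lemma powr_add_ge:
  fixes u w a :: real
  assumes "0 < u" "u \<le> w" "0 \<le> a"
  shows "u powr a * (1 + a*(w-u)/w) \<le> w powr a"
proof -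
  have w0: "0 < w" using assms by simp
  have e: "w = u * (w/u)" using assms by simp
  have l: "1 - u/w \<le> ln (w/u)"
  proof -
    have "ln (u/w) \<le> u/w - 1" using assms w0 by (intro ln_le_minus_one) simp
    moreover have "ln (u/w) = - ln (w/u)" using assms w0 by (simp add: ln_div)
    ultimately show ?thesis by simp
  qed
  have "(w/u) powr a = exp (a * ln (w/u))" using assms w0 by (simp add: powr_def)
  also have "\<dots> \<ge> 1 + a * ln (w/u)" by simp
  finally have "1 + a*(1 - u/w) \<le> (w/u) powr a"
    using l assms by (smt (verit) mult_left_mono)
  moreover have "a*(w-u)/w = a*(1-u/w)" using w0 by (simp add: field_simps)
  moreover have "w powr a = u powr a * (w/u) powr a"
    using assms w0 by (simp add: powr_mult[symmetric])
  ultimately show ?thesis using assms by (simp add: mult_left_mono)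
qed

lemma powr_ratio:
  fixes u w a :: real
  assumes "0 < u" "u \<le> w" "0 \<le> a" "a \<le> 1"
  shows "u * w powr a \<le> w * u powr a"
proof -
  have w0: "0 < w" using assms by simp
  have "(u/w) powr 1 \<le> (u/w) powr a" using assms w0 by (intro powr_mono') auto
  hence "u/w \<le> u powr a / w powr a" using assms w0 by (simp add: powr_divide)
  thus ?thesis using assms w0 by (simp add: field_simps)
qed

lemma den_bounds:
  fixes a U V :: real
  assumes a0: "0 < a" and a1: "a < 1" and V0: "0 < V" and VU: "V \<le> U"
  defines "P \<equiv> U powr a" and "Q \<equiv> V powr a" and "R \<equiv> (U+V) powr a"
  shows "a/8*V*P*(1+R) \<le> U*(R-P)*(1+Q) + V*(R-Q)*(1+P)"
    and "U*(R-P)*(1+Q) + V*(R-Q)*(1+P) \<le> 3*V*P*(1+P)"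
proof -
  have U0: "0 < U" using V0 VU by simp
  have P0: "0 < P" "0 < Q" using U0 V0 by (simp_all add: P_def Q_def)
  have QP: "Q \<le> P" unfolding P_def Q_def using V0 VU a0 by (intro powr_mono2) auto
  have PR: "P \<le> R" unfolding P_def R_def using V0 VU a0 by (intro powr_mono2) auto
  have R1: "R \<le> P * (1 + V/U)" unfolding P_def R_def
    using U0 V0 a0 a1 by (intro powr_add_le) auto
  have R1': "U*R \<le> U*P + V*P"
  proof -
    have "U*R \<le> U*(P*(1+V/U))" using R1 U0 by (simp add: mult_left_mono)
    also have "\<dots> = U*P + V*P" using U0 by (simp add: field_simps)
    finally show ?thesis .
  qed
  have R2: "R \<le> 2*P"
  proof -
    have "V/U \<le> 1" using VU U0 by simp
    hence "P*(1+V/U) \<le> P*2" using P0 by (intro mult_left_mono) auto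
    thus ?thesis using R1 by simp
  qed
  have R3: "Q * (1 + a*((U+V)-V)/(U+V)) \<le> R" unfolding Q_def R_def
    using V0 U0 a0 by (intro powr_add_ge) auto
  have "a/2 \<le> a*((U+V)-V)/(U+V)" using U0 V0 VU a0 by (simp add: field_simps)
  hence "Q*(1+a/2) \<le> Q * (1 + a*((U+V)-V)/(U+V))" using P0 by (intro mult_left_mono) auto
  hence R4: "Q*(1+a/2) \<le> R" using R3 by linarith
  have RQ: "a*P/4 \<le> R - Q"
  proof (cases "Q \<le> P/2")
    case True
    have "a*P \<le> 1*P" using a1 P0 by (intro mult_right_mono) auto
    thus ?thesis using True PR P0 by linarith
  next
    case False
    hence "a*(P/4) \<le> a*(Q/2)" using a0 by (intro mult_left_mono) auto
    hence "a*P/4 \<le> a*Q/2" by simp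
    thus ?thesis using R4 by (simp add: algebra_simps)
  qed
  have t1: "0 \<le> U*(R-P)*(1+Q)" using U0 PR P0 by simp
  have "a/8*V*P*(1+R) \<le> a/8*V*P*(2*(1+P))"
    using R2 a0 V0 P0 by (intro mult_left_mono) auto
  also have "\<dots> = V*(a*P/4)*(1+P)" by (simp add: algebra_simps)
  also have "\<dots> \<le> V*(R-Q)*(1+P)"
    using RQ V0 P0 by (intro mult_right_mono mult_left_mono) auto
  finally show "a/8*V*P*(1+R) \<le> U*(R-P)*(1+Q) + V*(R-Q)*(1+P)" using t1 by linarith
  have "U*(R-P) \<le> V*P" using R1' by (simp add: algebra_simps)
  hence u1: "U*(R-P)*(1+Q) \<le> V*P*(1+P)"
    using QP P0 V0 by (meson mult_mono less_le add_left_mono mult_nonneg_nonneg order_trans le_add_same_cancel1 zero_le_one less_imp_le t1)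
  have "V*(R-Q)*(1+P) \<le> V*(2*P)*(1+P)"
    using R2 P0 V0 by (intro mult_right_mono mult_left_mono) auto
  thus "U*(R-P)*(1+Q) + V*(R-Q)*(1+P) \<le> 3*V*P*(1+P)" using u1 by (simp add: algebra_simps)
qed

lemma m_form:
  "m_mult a x y = (x+y)*(1+\<bar>x\<bar> powr a)*(1+\<bar>y\<bar> powr a) /
     (2*(x*(\<bar>x\<bar> powr a-\<bar>x+y\<bar> powr a)*(1+\<bar>y\<bar> powr a)
       + y*(\<bar>y\<bar> powr a-\<bar>x+y\<bar> powr a)*(1+\<bar>x\<bar> powr a)))"
  unfolding m_mult_def Let_def by (simp add: algebra_simps)

lemma m_neg: "m_mult a (-x) (-y) = m_mult a x y"
proof -
  have h: "\<bar>-x + -y\<bar> = \<bar>x+y\<bar>" by simp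
  have "m_mult a (-x) (-y) = (-((x+y)*(1+\<bar>x\<bar> powr a)*(1+\<bar>y\<bar> powr a))) /
     (-(2*(x*(\<bar>x\<bar> powr a-\<bar>x+y\<bar> powr a)*(1+\<bar>y\<bar> powr a)
       + y*(\<bar>y\<bar> powr a-\<bar>x+y\<bar> powr a)*(1+\<bar>x\<bar> powr a))))"
    unfolding m_form h by (simp only: abs_minus_cancel) (simp add: algebra_simps)
  also have "\<dots> = m_mult a x y" unfolding m_form by (rule minus_divide_divide)
  finally show ?thesis .
qed

lemma m_sym: "m_mult a y x = m_mult a x y"
  unfolding m_form by (simp add: algebra_simps)

lemma div_bounds:
  fixes Dn L1 L2 N Y K K' :: real
  assumes "0 < Dn" "L1 \<le> Dn" "Dn \<le> L2" "0 \<le> N" "0 < Y" "0 \<le> K"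
    "N*Y \<le> 2*K*L1" "2*K'*L2 \<le> N*Y"
  shows "K' \<le> N/(2*Dn)*Y" "N/(2*Dn)*Y \<le> K"
proof -
  have e: "N/(2*Dn)*Y = N*Y/(2*Dn)" by simp
  have "2*K*L1 \<le> 2*K*Dn" using assms by (intro mult_left_mono) auto
  thus "N/(2*Dn)*Y \<le> K" unfolding e using assms by (simp add: pos_divide_le_eq)
  show "K' \<le> N/(2*Dn)*Y"
  proof (cases "K' \<le> 0")
    case True
    have "0 \<le> N*Y/(2*Dn)" using assms by simp
    thus ?thesis unfolding e using True by linarith
  next
    case False
    have "2*K'*Dn \<le> 2*K'*L2" using assms False by (intro mult_left_mono) auto
    thus ?thesis unfolding e using assms by (simp add: pos_le_divide_eq)
  qed
qed

lemma core:
  fixes a x y :: real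
  assumes a0: "0 < a" and a1: "a < 1" and x0: "0 < x" and y0: "y \<noteq> 0"
    and yx: "\<bar>y\<bar> \<le> x" and xy: "x + y \<noteq> 0"
  defines "p \<equiv> x powr a"
  shows "x/p/12 \<le> \<bar>m_mult a x y\<bar> * \<bar>y\<bar> \<and> \<bar>m_mult a x y\<bar> * \<bar>y\<bar> \<le> 8/a*(x + x/p)"
proof -
  define q where "q = \<bar>y\<bar> powr a"
  define r where "r = \<bar>x+y\<bar> powr a"
  define N where "N = (x+y)*(1+p)*(1+q)"
  define Dx where "Dx = x*(p-r)*(1+q)+y*(q-r)*(1+p)"
  have mf0: "m_mult a x y = N/(2*Dx)"
    unfolding m_form N_def Dx_def p_def q_def r_def using x0 by simp
  have mf: "\<bar>m_mult a x y\<bar> = \<bar>N\<bar>/(2*\<bar>Dx\<bar>)"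
    unfolding mf0 by (simp only: abs_divide abs_mult abs_numeral)
  have p0: "0 < p" and q0: "0 < q" and r0: "0 < r"
    using x0 y0 xy by (simp_all add: p_def q_def r_def)
  define k where "k = x/p"
  have kp: "k*p = x" using p0 by (simp add: k_def)
  have k0: "0 < k" using x0 p0 by (simp add: k_def)
  have Kpos: "0 \<le> 8/a*(x+k)" using a0 x0 k0 by simp
  have main: "k/12 \<le> \<bar>N\<bar>/(2*\<bar>Dx\<bar>) * \<bar>y\<bar> \<and> \<bar>N\<bar>/(2*\<bar>Dx\<bar>) * \<bar>y\<bar> \<le> 8/a*(x+k)"
  proof (cases "y > 0")
    case True
    have yx': "y \<le> x" using yx by simp
    note db = den_bounds[OF a0 a1 True yx']
    have ay: "\<bar>y\<bar> = y" "\<bar>x+y\<bar> = x+y" using True x0 by auto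
    have qd: "q = y powr a" and rd: "r = (x+y) powr a" using ay by (simp_all add: q_def r_def)
    note db = db[folded p_def qd rd]
    have qr: "q \<le> r" unfolding qd rd using True x0 a0 by (intro powr_mono2) auto
    have pr: "p \<le> r" unfolding p_def rd using True x0 a0 by (intro powr_mono2) auto
    have DD: "\<bar>Dx\<bar> = x*(r-p)*(1+q) + y*(r-q)*(1+p)"
    proof -
      have "0 \<le> x*(r-p)*(1+q) + y*(r-q)*(1+p)" using x0 True pr qr p0 q0 by simp
      moreover have "Dx = -(x*(r-p)*(1+q) + y*(r-q)*(1+p))" unfolding Dx_def by (simp add: algebra_simps)
      ultimately show ?thesis by simp
    qed
    have L10: "0 < a/8*y*p*(1+r)" using a0 True p0 r0 by simp
    have NN: "\<bar>N\<bar> = N" unfolding N_def using x0 True p0 q0 by simp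
    have e1: "2*(8/a*(x+k))*(a/8*y*p*(1+r)) = 2*x*(1+p)*y*(1+r)"
      unfolding kp[symmetric] using a0 by (simp add: field_simps)
    have i1: "N*y \<le> 2*x*(1+p)*y*(1+r)"
    proof -
      have "((x+y)*(1+q))*((1+p)*y) \<le> ((2*x)*(1+r))*((1+p)*y)"
        using yx True qr x0 p0 q0 by (intro mult_right_mono mult_mono) auto
      thus ?thesis unfolding N_def by (simp add: algebra_simps)
    qed
    have e2: "2*(k/12)*(3*y*p*(1+p)) = x*y*(1+p)/2" unfolding kp[symmetric] by (simp add: field_simps)
    have i2: "x*y*(1+p)/2 \<le> N*y"
    proof -
      have "(x/2*1)*((1+p)*y) \<le> ((x+y)*(1+q))*((1+p)*y)"
        using True x0 p0 q0 by (intro mult_right_mono mult_mono) auto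
      thus ?thesis unfolding N_def by (simp add: algebra_simps)
    qed
      have P1: "0 < \<bar>Dx\<bar>" using DD db L10 by linarith
      have P2: "a/8*y*p*(1+r) \<le> \<bar>Dx\<bar>" using DD db by linarith
      have P3: "\<bar>Dx\<bar> \<le> 3*y*p*(1+p)" using DD db by linarith
      have NY: "\<bar>N\<bar>*\<bar>y\<bar> = N*y" using NN ay by simp
      have P7: "\<bar>N\<bar>*\<bar>y\<bar> \<le> 2*(8/a*(x+k))*(a/8*y*p*(1+r))" using NY e1 i1 by linarith
      have P8: "2*(k/12)*(3*y*p*(1+p)) \<le> \<bar>N\<bar>*\<bar>y\<bar>" using NY e2 i2 by linarith
      show ?thesis using div_bounds[OF P1 P2 P3 abs_ge_zero _ Kpos P7 P8] y0 by simp
  next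
    case False
    hence yn: "y < 0" using y0 by simp
    define sv where "sv = -y"
    have s0: "0 < sv" using yn by (simp add: sv_def)
    have xi0: "0 < x + y" using yx yn xy by simp
    have ay: "\<bar>y\<bar> = sv" "\<bar>x+y\<bar> = x+y" using yn xi0 by (auto simp: sv_def)
    have qd: "q = sv powr a" and rd: "r = (x+y) powr a" using ay by (simp_all add: q_def r_def)
    have xs: "x = (x+y) + sv" by (simp add: sv_def)
    have DD0: "Dx = (x+y)*(p-r)*(1+q) + sv*(p-q)*(1+r)" unfolding Dx_def sv_def by (simp add: algebra_simps)
    have NN: "\<bar>N\<bar> = N" unfolding N_def using xi0 p0 q0 by simp
    show ?thesis
    proof (cases "sv \<le> x + y")
      case True
      have xs': "x + y + sv = x" by (simp add: sv_def)
      note db = den_bounds[OF a0 a1 s0 True, unfolded xs', folded p_def qd rd]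
      have db: "a/8 * sv*r*(1+p) \<le> (x+y)*(p-r)*(1+q) + sv*(p-q)*(1+r)"
           "(x+y)*(p-r)*(1+q) + sv*(p-q)*(1+r) \<le> 3 * sv*r*(1+r)"
        using db by (simp_all add: algebra_simps)
      have L10: "0 < a/8 * sv*r*(1+p)" using a0 s0 p0 r0 by simp
      have DD: "\<bar>Dx\<bar> = (x+y)*(p-r)*(1+q) + sv*(p-q)*(1+r)" using DD0 db L10 by simp
      have qr: "q \<le> r" unfolding qd rd using True s0 a0 by (intro powr_mono2) auto
      have rp: "r \<le> p" unfolding p_def rd using xi0 s0 a0 xs by (intro powr_mono2) auto
      have rat: "(x+y)*p \<le> x*r" unfolding p_def rd using xi0 s0 xs a0 a1
        by (intro powr_ratio) auto
      have e1: "2*(8/a*(x+k))*(a/8 * sv*r*(1+p)) = 2*(x+k)*r*(sv*(1+p))"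
        using a0 by (simp add: field_simps)
      have i1: "N * sv \<le> 2*(x+k)*r*(sv*(1+p))"
      proof -
        have e: "x*r = (k*r)*p" by (simp add: kp[symmetric] algebra_simps)
        have "(x+y)*p \<le> (k*r)*p" using rat unfolding e .
        hence "(x+y) \<le> k*r" using p0 by simp
        moreover have "(x+y)*q \<le> x*r" using qr xi0 q0 xs s0 by (intro mult_mono) auto
        moreover have "0 \<le> k*r" "0 \<le> x*r" using x0 k0 r0 by simp_all
        moreover have "(x+y)*(1+q) = (x+y) + (x+y)*q" "2*(x+k)*r = 2*(k*r) + 2*(x*r)"
          by (simp_all add: algebra_simps)
        ultimately have "(x+y)*(1+q) \<le> 2*(x+k)*r" by linarith
        hence "((x+y)*(1+q))*(sv*(1+p)) \<le> (2*(x+k)*r)*(sv*(1+p))"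
          using s0 p0 by (intro mult_right_mono) auto
        thus ?thesis unfolding N_def by (simp add: algebra_simps)
      qed
      have e2: "2*(k/12)*(3 * sv*r*(1+r)) = (k*r)*(1+r) * sv/2" by (simp add: field_simps)
      have i2: "(k*r)*(1+r) * sv/2 \<le> N * sv"
      proof -
        have "k*r \<le> k*p" using rp k0 by simp
        hence "(k*r)*(1+r) \<le> x*(1+p)" using kp rp r0 x0 by (intro mult_mono) auto
        moreover have "x*(1+p) \<le> (2*(x+y))*(1+p)" using True xs p0 by (intro mult_right_mono) auto
        moreover have "(2*(x+y))*(1+p)*1 \<le> (2*(x+y))*(1+p)*(1+q)" using xi0 p0 q0
          by (intro mult_left_mono) auto
        ultimately have "(k*r)*(1+r) \<le> 2*((x+y)*(1+p)*(1+q))" by (simp add: algebra_simps)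
        hence "(k*r)*(1+r) * sv \<le> 2*((x+y)*(1+p)*(1+q)) * sv" using s0 by (intro mult_right_mono) auto
        thus ?thesis unfolding N_def by simp
      qed
      have P1: "0 < \<bar>Dx\<bar>" using DD db L10 by linarith
      have P2: "a/8 * sv*r*(1+p) \<le> \<bar>Dx\<bar>" using DD db by linarith
      have P3: "\<bar>Dx\<bar> \<le> 3 * sv*r*(1+r)" using DD db by linarith
      have NY: "\<bar>N\<bar>*\<bar>y\<bar> = N * sv" using NN ay by simp
      have P7: "\<bar>N\<bar>*\<bar>y\<bar> \<le> 2*(8/a*(x+k))*(a/8 * sv*r*(1+p))" using NY e1 i1 by linarith
      have P8: "2*(k/12)*(3 * sv*r*(1+r)) \<le> \<bar>N\<bar>*\<bar>y\<bar>" using NY e2 i2 by linarith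
      show ?thesis using div_bounds[OF P1 P2 P3 abs_ge_zero _ Kpos P7 P8] y0 by simp
    next
      case False
      hence sx: "x + y \<le> sv" by simp
      have xs': "sv + (x + y) = x" by (simp add: sv_def)
      note db = den_bounds[OF a0 a1 xi0 sx, unfolded xs', folded p_def qd rd]
      have db: "a/8*(x+y)*q*(1+p) \<le> (x+y)*(p-r)*(1+q) + sv*(p-q)*(1+r)"
           "(x+y)*(p-r)*(1+q) + sv*(p-q)*(1+r) \<le> 3*(x+y)*q*(1+q)"
        using db by (simp_all add: algebra_simps)
      have L10: "0 < a/8*(x+y)*q*(1+p)" using a0 xi0 p0 q0 by simp
      have DD: "\<bar>Dx\<bar> = (x+y)*(p-r)*(1+q) + sv*(p-q)*(1+r)" using DD0 db L10 by simp
      have qp: "q \<le> p" unfolding p_def qd using xi0 s0 a0 xs by (intro powr_mono2) auto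
      have rat: "sv*p \<le> x*q" unfolding p_def qd using xi0 s0 xs a0 a1
        by (intro powr_ratio) auto
      have e1: "2*(8/a*(x+k))*(a/8*(x+y)*q*(1+p)) = 2*(x+k)*q*((x+y)*(1+p))"
        using a0 by (simp add: field_simps)
      have i1: "N * sv \<le> 2*(x+k)*q*((x+y)*(1+p))"
      proof -
        have e: "x*q = (k*q)*p" by (simp add: kp[symmetric] algebra_simps)
        have "sv*p \<le> (k*q)*p" using rat unfolding e .
        hence "sv \<le> k*q" using p0 by simp
        moreover have "sv*q \<le> x*q" using xs xi0 q0 by simp
        moreover have "0 \<le> k*q" "0 \<le> x*q" using x0 k0 q0 by simp_all
        moreover have "sv*(1+q) = sv + sv*q" "2*(x+k)*q = 2*(k*q) + 2*(x*q)"
          by (simp_all add: algebra_simps)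
        ultimately have "sv*(1+q) \<le> 2*(x+k)*q" by linarith
        hence "(sv*(1+q))*((x+y)*(1+p)) \<le> (2*(x+k)*q)*((x+y)*(1+p))"
          using xi0 p0 by (intro mult_right_mono) auto
        thus ?thesis unfolding N_def by (simp add: algebra_simps)
      qed
      have e2: "2*(k/12)*(3*(x+y)*q*(1+q)) = (k*q)*((x+y)*(1+q))/2" by (simp add: field_simps)
      have i2: "(k*q)*((x+y)*(1+q))/2 \<le> N * sv"
      proof -
        have "k*q \<le> k*p" using qp k0 by simp
        hence "k*q \<le> x" using kp by simp
        moreover have "x \<le> 2 * sv" using sx xs by simp
        moreover have "sv*1 \<le> sv*(1+p)" using s0 p0 by (intro mult_left_mono) auto
        ultimately have "k*q \<le> 2*((1+p) * sv)" by (simp add: algebra_simps)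
        hence "(k*q)*((x+y)*(1+q)) \<le> (2*((1+p) * sv))*((x+y)*(1+q))"
          using xi0 q0 by (intro mult_right_mono) auto
        thus ?thesis unfolding N_def by (simp add: algebra_simps)
      qed
      have P1: "0 < \<bar>Dx\<bar>" using DD db L10 by linarith
      have P2: "a/8*(x+y)*q*(1+p) \<le> \<bar>Dx\<bar>" using DD db by linarith
      have P3: "\<bar>Dx\<bar> \<le> 3*(x+y)*q*(1+q)" using DD db by linarith
      have NY: "\<bar>N\<bar>*\<bar>y\<bar> = N * sv" using NN ay by simp
      have P7: "\<bar>N\<bar>*\<bar>y\<bar> \<le> 2*(8/a*(x+k))*(a/8*(x+y)*q*(1+p))" using NY e1 i1 by linarith
      have P8: "2*(k/12)*(3*(x+y)*q*(1+q)) \<le> \<bar>N\<bar>*\<bar>y\<bar>" using NY e2 i2 by linarith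
      show ?thesis using div_bounds[OF P1 P2 P3 abs_ge_zero _ Kpos P7 P8] y0 by simp
    qed
  qed
  thus ?thesis unfolding mf k_def by simp
qed


lemma core2:
  fixes a x y :: real
  assumes a0: "0 < a" and a1: "a < 1" and y0: "y \<noteq> 0"
    and yx: "\<bar>y\<bar> \<le> \<bar>x\<bar>" and xy: "x + y \<noteq> 0"
  shows "\<bar>x\<bar>/\<bar>x\<bar> powr a/12 \<le> \<bar>m_mult a x y\<bar> * \<bar>y\<bar> \<and>
    \<bar>m_mult a x y\<bar> * \<bar>y\<bar> \<le> 8/a*(\<bar>x\<bar> + \<bar>x\<bar>/\<bar>x\<bar> powr a)"
proof (cases "x > 0")
  case True
  thus ?thesis using core[OF a0 a1 True y0 _ xy] yx by simp
next
  case False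
  hence x0: "0 < -x" using yx y0 by auto
  have "\<bar>-y\<bar> \<le> -x" using yx False by simp
  from core[OF a0 a1 x0 _ this] y0 xy have
    "-x/(-x) powr a/12 \<le> \<bar>m_mult a (-x) (-y)\<bar> * \<bar>-y\<bar> \<and>
     \<bar>m_mult a (-x) (-y)\<bar> * \<bar>-y\<bar> \<le> 8/a*(-x + -x/(-x) powr a)" by simp
  moreover have "\<bar>x\<bar> = -x" using False by simp
  ultimately show ?thesis unfolding m_neg by simp
qed

lemma final:
  fixes a x y :: real
  assumes a0: "0 < a" and a1: "a < 1" and y0: "y \<noteq> 0"
    and yx: "\<bar>y\<bar> \<le> \<bar>x\<bar>" and xy: "x + y \<noteq> 0"
  shows "(x\<^sup>2 + y\<^sup>2 \<le> 1 \<longrightarrow>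
       \<bar>x\<bar> / \<bar>y\<bar> + \<bar>y\<bar> / \<bar>x\<bar> \<le> 24/a * \<bar>m_mult a x y\<bar> \<and>
       \<bar>m_mult a x y\<bar> \<le>
         24/a * (\<bar>x\<bar> powr (1 - a) / \<bar>y\<bar> + \<bar>y\<bar> powr (1 - a) / \<bar>x\<bar>)) \<and>
    (x\<^sup>2 + y\<^sup>2 \<ge> 1 \<longrightarrow>
       \<bar>x\<bar> powr (1 - a) / \<bar>y\<bar> + \<bar>y\<bar> powr (1 - a) / \<bar>x\<bar>
         \<le> 24/a * \<bar>m_mult a x y\<bar> \<and>
       \<bar>m_mult a x y\<bar> \<le> 24/a * (\<bar>x\<bar> / \<bar>y\<bar> + \<bar>y\<bar> / \<bar>x\<bar>))"
proof -
  define T where "T = \<bar>x\<bar>"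
  define Y where "Y = \<bar>y\<bar>"
  define M where "M = \<bar>m_mult a x y\<bar>"
  define p where "p = T powr a"
  define k where "k = T/p"
  have Y0: "0 < Y" using y0 by (simp add: Y_def)
  have YT: "Y \<le> T" using yx by (simp add: Y_def T_def)
  have T0: "0 < T" using Y0 YT by simp
  have p0: "0 < p" using T0 by (simp add: p_def)
  have kp: "k*p = T" using p0 by (simp add: k_def)
  have k0: "0 < k" using T0 p0 by (simp add: k_def)
  have kpow: "T powr (1-a) = k" unfolding k_def p_def using T0 by (simp add: powr_diff)
  have cb: "k/12 \<le> M*Y" "M*Y \<le> 8/a*(T+k)"
    using core2[OF a0 a1 y0 yx xy] unfolding T_def Y_def M_def k_def p_def by auto
  have M0: "0 \<le> M" by (simp add: M_def)
  have Ca: "24 \<le> 24/a" using a0 a1 by (simp add: field_simps)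
  have Ca0: "0 < 24/a" using a0 by simp
  have YTr: "Y/T \<le> T/Y"
  proof -
    have "Y*Y \<le> T*T" using Y0 YT by (intro mult_mono) auto
    thus ?thesis using Y0 T0 by (simp add: divide_simps)
  qed
  have YTp: "Y powr (1-a)/T \<le> k/Y"
  proof -
    have "Y powr (1-a) \<le> T powr (1-a)" using Y0 YT a1 by (intro powr_mono2) auto
    hence "Y * Y powr (1-a) \<le> T * k" using Y0 YT kpow by (intro mult_mono) auto
    thus ?thesis using Y0 T0 by (simp add: divide_simps mult.commute)
  qed
  have Ml1: "k/(12*Y) \<le> M" using cb(1) Y0 by (simp add: divide_simps mult.commute)
  have Mu1: "M \<le> (8/a*(T+k))/Y" using cb(2) Y0 by (subst pos_le_divide_eq) auto
  have AB: "0 \<le> Y powr (1-a)/T" using T0 by simp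
  have small: "T \<le> 1 \<Longrightarrow> T/Y + Y/T \<le> 24/a * M \<and> M \<le> 24/a * (k/Y + Y powr (1-a)/T)"
  proof -
    assume T1: "T \<le> 1"
    have "p \<le> 1" unfolding p_def using T0 T1 a0 by (intro powr_le1) auto
    hence "k*p \<le> k*1" using k0 by (intro mult_left_mono) auto
    hence Tk: "T \<le> k" using kp by simp
    have "T/Y \<le> k/Y" using Tk Y0 by (simp add: divide_right_mono)
    hence "T/Y + Y/T \<le> 24 * (k/(12*Y))" using YTr by simp
    also have "\<dots> \<le> 24 * M" using Ml1 by simp
    also have "\<dots> \<le> 24/a * M" using Ca M0 by (intro mult_right_mono) auto
    finally have 1: "T/Y + Y/T \<le> 24/a * M" .
    have "8/a*(T+k)/Y \<le> 8/a*(2*k)/Y" using Tk Y0 a0 by (simp add: divide_right_mono)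
    also have "\<dots> = 16/a*(k/Y)" by simp
    also have "\<dots> \<le> 24/a*(k/Y + Y powr (1-a)/T)" using AB a0 k0 Y0
      by (intro mult_mono) (auto simp: divide_simps)
    finally have "M \<le> 24/a * (k/Y + Y powr (1-a)/T)" using Mu1 by linarith
    with 1 show ?thesis by simp
  qed
  have large: "1/2 \<le> T \<Longrightarrow> k/Y + Y powr (1-a)/T \<le> 24/a * M \<and> M \<le> 24/a * (T/Y + Y/T)"
  proof -
    assume T1: "1/2 \<le> T"
    have "(1/2::real) powr 1 \<le> (1/2) powr a" using a1 by (intro powr_mono') auto
    also have "(1/2::real) powr a \<le> T powr a" using T1 a0 by (intro powr_mono2) auto
    finally have "1/2 \<le> p" by (simp add: p_def)
    hence "k*(1/2) \<le> k*p" using k0 by (intro mult_left_mono) auto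
    hence Tk: "k \<le> 2*T" using kp by simp
    have "k/Y + Y powr (1-a)/T \<le> 24 * (k/(12*Y))" using YTp by simp
    also have "\<dots> \<le> 24 * M" using Ml1 by simp
    also have "\<dots> \<le> 24/a * M" using Ca M0 by (intro mult_right_mono) auto
    finally have 1: "k/Y + Y powr (1-a)/T \<le> 24/a * M" .
    have "8/a*(T+k)/Y \<le> 8/a*(3*T)/Y" using Tk Y0 a0 by (simp add: divide_right_mono)
    also have "\<dots> = 24/a*(T/Y)" by simp
    also have "\<dots> \<le> 24/a*(T/Y + Y/T)" using a0 Y0 T0 by (intro mult_left_mono) auto
    finally have "M \<le> 24/a * (T/Y + Y/T)" using Mu1 by linarith
    with 1 show ?thesis by simp
  qed
  have s1: "x\<^sup>2 + y\<^sup>2 \<le> 1 \<Longrightarrow> T \<le> 1"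
  proof -
    assume "x\<^sup>2 + y\<^sup>2 \<le> 1"
    hence "T\<^sup>2 \<le> 1" unfolding T_def using zero_le_power2[of y] by (simp only: power2_abs)
    thus "T \<le> 1" using power2_le_imp_le[of T 1] by simp
  qed
  have s2: "x\<^sup>2 + y\<^sup>2 \<ge> 1 \<Longrightarrow> 1/2 \<le> T"
  proof (rule ccontr)
    assume h: "x\<^sup>2 + y\<^sup>2 \<ge> 1" "\<not> 1/2 \<le> T"
    have "Y < 1/2" using h YT by simp
    have "x\<^sup>2 = T*T" "y\<^sup>2 = Y*Y" by (simp_all add: T_def Y_def power2_eq_square abs_mult_self_eq)
    moreover have "T*T \<le> 1/2*(1/2)" using h T0 by (intro mult_mono) auto
    moreover have "Y*Y \<le> 1/2*(1/2)" using \<open>Y < 1/2\<close> Y0 by (intro mult_mono) auto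
    ultimately show False using h by simp
  qed
  show ?thesis using small large s1 s2 unfolding T_def[symmetric] Y_def[symmetric] M_def[symmetric] kpow
    by blast
qed

theorem proposition2p1:
  fixes \<alpha> :: real
  assumes "0 < \<alpha>" and "\<alpha> < 1"
  shows "\<exists>C>0. \<forall>\<xi> \<eta> :: real. \<eta> \<noteq> 0 \<longrightarrow> \<xi> - \<eta> \<noteq> 0 \<longrightarrow> \<xi> \<noteq> 0 \<longrightarrow>
    ((\<xi> - \<eta>)\<^sup>2 + \<eta>\<^sup>2 \<le> 1 \<longrightarrow>
       \<bar>\<xi> - \<eta>\<bar> / \<bar>\<eta>\<bar> + \<bar>\<eta>\<bar> / \<bar>\<xi> - \<eta>\<bar> \<le> C * \<bar>m_mult \<alpha> (\<xi> - \<eta>) \<eta>\<bar> \<and>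
       \<bar>m_mult \<alpha> (\<xi> - \<eta>) \<eta>\<bar> \<le>
         C * (\<bar>\<xi> - \<eta>\<bar> powr (1 - \<alpha>) / \<bar>\<eta>\<bar> + \<bar>\<eta>\<bar> powr (1 - \<alpha>) / \<bar>\<xi> - \<eta>\<bar>)) \<and>
    ((\<xi> - \<eta>)\<^sup>2 + \<eta>\<^sup>2 \<ge> 1 \<longrightarrow>
       \<bar>\<xi> - \<eta>\<bar> powr (1 - \<alpha>) / \<bar>\<eta>\<bar> + \<bar>\<eta>\<bar> powr (1 - \<alpha>) / \<bar>\<xi> - \<eta>\<bar>
         \<le> C * \<bar>m_mult \<alpha> (\<xi> - \<eta>) \<eta>\<bar> \<and>
       \<bar>m_mult \<alpha> (\<xi> - \<eta>) \<eta>\<bar> \<le> C * (\<bar>\<xi> - \<eta>\<bar> / \<bar>\<eta>\<bar> + \<bar>\<eta>\<bar> / \<bar>\<xi> - \<eta>\<bar>))"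
proof (intro exI[of _ "24/\<alpha>"] conjI allI impI)
  show "0 < 24/\<alpha>" using assms by simp
next
  fix \<xi> \<eta> :: real
  assume h: "\<eta> \<noteq> 0" "\<xi> - \<eta> \<noteq> 0" "\<xi> \<noteq> 0"
  have F: "(((\<xi> - \<eta>)\<^sup>2 + \<eta>\<^sup>2 \<le> 1 \<longrightarrow>
       \<bar>\<xi> - \<eta>\<bar> / \<bar>\<eta>\<bar> + \<bar>\<eta>\<bar> / \<bar>\<xi> - \<eta>\<bar> \<le> 24/\<alpha> * \<bar>m_mult \<alpha> (\<xi> - \<eta>) \<eta>\<bar> \<and>
       \<bar>m_mult \<alpha> (\<xi> - \<eta>) \<eta>\<bar> \<le>
         24/\<alpha> * (\<bar>\<xi> - \<eta>\<bar> powr (1 - \<alpha>) / \<bar>\<eta>\<bar> + \<bar>\<eta>\<bar> powr (1 - \<alpha>) / \<bar>\<xi> - \<eta>\<bar>)) \<and>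
    ((\<xi> - \<eta>)\<^sup>2 + \<eta>\<^sup>2 \<ge> 1 \<longrightarrow>
       \<bar>\<xi> - \<eta>\<bar> powr (1 - \<alpha>) / \<bar>\<eta>\<bar> + \<bar>\<eta>\<bar> powr (1 - \<alpha>) / \<bar>\<xi> - \<eta>\<bar>
         \<le> 24/\<alpha> * \<bar>m_mult \<alpha> (\<xi> - \<eta>) \<eta>\<bar> \<and>
       \<bar>m_mult \<alpha> (\<xi> - \<eta>) \<eta>\<bar> \<le> 24/\<alpha> * (\<bar>\<xi> - \<eta>\<bar> / \<bar>\<eta>\<bar> + \<bar>\<eta>\<bar> / \<bar>\<xi> - \<eta>\<bar>)))"
  proof (cases "\<bar>\<eta>\<bar> \<le> \<bar>\<xi> - \<eta>\<bar>")
    case True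
    have "\<xi> - \<eta> + \<eta> \<noteq> 0" using h by simp
    from final[OF assms h(1) True this] show ?thesis .
  next
    case False
    hence le: "\<bar>\<xi> - \<eta>\<bar> \<le> \<bar>\<eta>\<bar>" by simp
    have "\<eta> + (\<xi> - \<eta>) \<noteq> 0" using h by simp
    from final[OF assms h(2) le this] show ?thesis
      unfolding m_sym[of \<alpha> "\<xi> - \<eta>" \<eta>] by (simp add: add.commute)
  qed
  thus "(\<xi> - \<eta>)\<^sup>2 + \<eta>\<^sup>2 \<le> 1 \<Longrightarrow> \<bar>\<xi> - \<eta>\<bar> / \<bar>\<eta>\<bar> + \<bar>\<eta>\<bar> / \<bar>\<xi> - \<eta>\<bar> \<le> 24/\<alpha> * \<bar>m_mult \<alpha> (\<xi> - \<eta>) \<eta>\<bar>"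
    and "(\<xi> - \<eta>)\<^sup>2 + \<eta>\<^sup>2 \<le> 1 \<Longrightarrow> \<bar>m_mult \<alpha> (\<xi> - \<eta>) \<eta>\<bar> \<le>
         24/\<alpha> * (\<bar>\<xi> - \<eta>\<bar> powr (1 - \<alpha>) / \<bar>\<eta>\<bar> + \<bar>\<eta>\<bar> powr (1 - \<alpha>) / \<bar>\<xi> - \<eta>\<bar>)"
    and "(\<xi> - \<eta>)\<^sup>2 + \<eta>\<^sup>2 \<ge> 1 \<Longrightarrow> \<bar>\<xi> - \<eta>\<bar> powr (1 - \<alpha>) / \<bar>\<eta>\<bar> + \<bar>\<eta>\<bar> powr (1 - \<alpha>) / \<bar>\<xi> - \<eta>\<bar>
         \<le> 24/\<alpha> * \<bar>m_mult \<alpha> (\<xi> - \<eta>) \<eta>\<bar>"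
    and "(\<xi> - \<eta>)\<^sup>2 + \<eta>\<^sup>2 \<ge> 1 \<Longrightarrow> \<bar>m_mult \<alpha> (\<xi> - \<eta>) \<eta>\<bar> \<le> 24/\<alpha> * (\<bar>\<xi> - \<eta>\<bar> / \<bar>\<eta>\<bar> + \<bar>\<eta>\<bar> / \<bar>\<xi> - \<eta>\<bar>)"
    by blast+
qed

end
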